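(* Let $L$ be a bounded lattice and $\otimes$ a t-norm on $L$ that is both $\wedge$-distributive and $\vee$-distributive and such that $\langle L,\otimes\rangle$ is divisible. Let $k_1,k_2\in\mathbb{N}^*$ and let $F_1,F_2:L^2\to L$ be such that, for $i=1,2$, $F_i$ is $\otimes^{k_i}$-homogeneous, has $1_L$ as neutral element and satisfies $F_i(x,y)=F_i(x\wedge y,x\vee y)$ for all $x,y\in L$. If $k_1\ge k_2$, then $F_1(x,y)\le_LF_2(x,y)$ for all $x,y\in L$.
   Context: A t-norm on $L$ is a commutative, associative map $L^2\to L$, non-decreasing in each argument, with neutral element $1_L$; $\wedge$-distributive: $x\otimes(y\wedge z)=(x\otimes y)\wedge(x\otimes z)$; $\vee$-distributive: $x\otimes(y\vee z)=(x\otimes y)\vee(x\otimes z)$. $\langle L,\otimes\rangle$ is divisible if for all $y\le_Lx$ there is $z$ with $y=x\otimes z$. Powers: $\lambda_\otimes^{(0)}=1_L$, $\lambda_\otimes^{(1)}=\lambda$, $\lambda_\otimes^{(m)}=\lambda\otimes\lambda_\otimes^{(m-1)}$ for $m\ge2$. $F$ is $\otimes^k$-homogeneous if $F(\lambda\otimes x,\lambda\otimes y)=\lambda_\otimes^{(k)}\otimes F(x,y)$ for all $\lambda,x,y$. $1_L$ is neutral for $F$ if $F(x,1_L)=F(1_L,x)=x$ for all $x$. *)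

theory Defs
  imports Main
begin

text \<open>L is modelled as a type of class bounded_lattice; 1_L is top, 0_L is bot.\<close>

definition is_tnorm :: "('a::bounded_lattice \<Rightarrow> 'a \<Rightarrow> 'a) \<Rightarrow> bool" where
  "is_tnorm T \<longleftrightarrow>
     (\<forall>x y. T x y = T y x) \<and>
     (\<forall>x y z. T x (T y z) = T (T x y) z) \<and>
     (\<forall>x y z. y \<le> z \<longrightarrow> T x y \<le> T x z) \<and>
     (\<forall>x y z. x \<le> y \<longrightarrow> T x z \<le> T y z) \<and>
     (\<forall>x. T x top = x \<and> T top x = x)"

definition meet_distributive :: "('a::bounded_lattice \<Rightarrow> 'a \<Rightarrow> 'a) \<Rightarrow> bool" where
  "meet_distributive T \<longleftrightarrow> (\<forall>x y z. T x (inf y z) = inf (T x y) (T x z))"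

definition join_distributive :: "('a::bounded_lattice \<Rightarrow> 'a \<Rightarrow> 'a) \<Rightarrow> bool" where
  "join_distributive T \<longleftrightarrow> (\<forall>x y z. T x (sup y z) = sup (T x y) (T x z))"

definition divisible :: "('a::bounded_lattice \<Rightarrow> 'a \<Rightarrow> 'a) \<Rightarrow> bool" where
  "divisible T \<longleftrightarrow> (\<forall>x y. y \<le> x \<longrightarrow> (\<exists>z. y = T x z))"

fun tpow :: "('a::bounded_lattice \<Rightarrow> 'a \<Rightarrow> 'a) \<Rightarrow> 'a \<Rightarrow> nat \<Rightarrow> 'a" where
  "tpow T l 0 = top"
| "tpow T l (Suc 0) = l"
| "tpow T l (Suc (Suc m)) = T l (tpow T l (Suc m))"

definition homogeneous :: "('a::bounded_lattice \<Rightarrow> 'a \<Rightarrow> 'a) \<Rightarrow> nat \<Rightarrow> ('a \<Rightarrow> 'a \<Rightarrow> 'a) \<Rightarrow> bool" where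
  "homogeneous T k F \<longleftrightarrow> (\<forall>l x y. F (T l x) (T l y) = T (tpow T l k) (F x y))"

definition neutral_top :: "('a::bounded_lattice \<Rightarrow> 'a \<Rightarrow> 'a) \<Rightarrow> bool" where
  "neutral_top F \<longleftrightarrow> (\<forall>x. F x top = x \<and> F top x = x)"

end

theory Submission
  imports Defs
begin

lemma tpow_step:
  assumes "is_tnorm T"
  shows "tpow T l (Suc n) \<le> tpow T l n"
proof (cases n)
  case 0 then show ?thesis by simp
next
  case (Suc m)
  have mono: "\<forall>x y z. x \<le> y \<longrightarrow> T x z \<le> T y z" and tp: "\<forall>x. T top x = x"
    using assms unfolding is_tnorm_def by auto
  have "T l (tpow T l (Suc m)) \<le> T top (tpow T l (Suc m))"
    using mono by simp
  also have "\<dots> = tpow T l (Suc m)" using tp by blast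
  finally show ?thesis using Suc by simp
qed

lemma tpow_anti:
  assumes "is_tnorm T" "m \<le> n"
  shows "tpow T l n \<le> tpow T l m"
  using assms(2)
proof (induction n)
  case 0 then show ?case by simp
next
  case (Suc n)
  show ?case
  proof (cases "m = Suc n")
    case True then show ?thesis by simp
  next
    case False
    then have "m \<le> n" using Suc.prems by simp
    then have "tpow T l n \<le> tpow T l m" using Suc.IH by simp
    then show ?thesis using tpow_step[OF assms(1), of l n] by (meson order_trans)
  qed
qed

lemma F_form:
  assumes "is_tnorm T" "homogeneous T k F" "neutral_top F"
    and "a = T b z"
  shows "F a b = T (tpow T b k) z"
proof -
  have "b = T b top" using assms(1) unfolding is_tnorm_def by auto
  then have "F a b = F (T b z) (T b top)" using assms(4) by simp
  also have "\<dots> = T (tpow T b k) (F z top)" using assms(2) unfolding homogeneous_def by blast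
  also have "\<dots> = T (tpow T b k) z" using assms(3) unfolding neutral_top_def by simp
  finally show ?thesis .
qed

theorem mainTheorem13:
  fixes T F1 F2 :: "'a::bounded_lattice \<Rightarrow> 'a \<Rightarrow> 'a" and k1 k2 :: nat
  assumes "is_tnorm T" and "meet_distributive T" and "join_distributive T"
    and "divisible T"
    and "k1 \<ge> 1" and "k2 \<ge> 1"
    and "homogeneous T k1 F1" and "homogeneous T k2 F2"
    and "neutral_top F1" and "neutral_top F2"
    and "\<forall>x y. F1 x y = F1 (inf x y) (sup x y)"
    and "\<forall>x y. F2 x y = F2 (inf x y) (sup x y)"
    and "k1 \<ge> k2"
  shows "\<forall>x y. F1 x y \<le> F2 x y"
proof (intro allI)
  fix x y :: 'a
  have "inf x y \<le> sup x y" by (meson inf_le1 le_supI1)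
  then obtain z where z: "inf x y = T (sup x y) z" using assms(4) unfolding divisible_def by blast
  have "F1 x y = T (tpow T (sup x y) k1) z"
    using assms(11) F_form[OF assms(1) assms(7) assms(9) z] by simp
  moreover have "F2 x y = T (tpow T (sup x y) k2) z"
    using assms(12) F_form[OF assms(1) assms(8) assms(10) z] by simp
  moreover have "tpow T (sup x y) k1 \<le> tpow T (sup x y) k2"
    using tpow_anti[OF assms(1) assms(13)] by simp
  ultimately show "F1 x y \<le> F2 x y" using assms(1) unfolding is_tnorm_def by auto
qed

end
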